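(* For every state $(s,t)$ and price $p\in[p_l,p_h]$, \[ \big\|\widehat P_n(\cdot\mid s,p)-\widetilde P_n(\cdot\mid s,p)\big\|_1\le\frac{|\mu_n(p)-h(p)|}{\sigma_n(p)}. \]
   Context: Let $s\in\{0,1,\dots,C\}$ and $p\in[p_l,p_h]$. Let $\mu_n(p)\in\mathbb{R}$ and $\sigma_n(p)>0$ be the posterior mean and standard deviation of a Gaussian process demand model in season $n$, and $h(p)\in\mathbb{R}$ the true expected demand at price $p$. Define intervals $I_0=(-\infty,\tfrac12)$, $I_q=[q-\tfrac12,q+\tfrac12]$ for $0<q<s$, $I_s=[s-\tfrac12,\infty)$ (when $s=0$, $I_0=\mathbb{R}$), and for $q\in\{0,\dots,s\}$ \[ \widehat P_n(q\mid s,p)=\int_{I_q}\mathcal{N}(y;\mu_n(p),\sigma_n^2(p))\,dy,\qquad \widetilde P_n(q\mid s,p)=\int_{I_q}\mathcal{N}(y;h(p),\sigma_n^2(p))\,dy, \] i.e. Gaussian mass in unit bins around integers, with all mass outside $[-\tfrac12,s+\tfrac12)$ assigned to the endpoints $q=0$ or $q=s$. $\|\cdot\|_1$ is the $\ell_1$ norm over $q\in\{0,\dots,s\}$. *)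

theory Defs
  imports "HOL-Probability.Probability"
begin

definition bin :: "nat \<Rightarrow> nat \<Rightarrow> real set" where
  "bin s q =
     (if s = 0 then UNIV
      else if q = 0 then {..<1/2}
      else if q = s then {real s - 1/2..}
      else {real q - 1/2 .. real q + 1/2})"

definition Pbin :: "real \<Rightarrow> real \<Rightarrow> nat \<Rightarrow> nat \<Rightarrow> real" where
  "Pbin m sd s q = (LINT y:bin s q|lborel. normal_density m sd y)"

end

theory Submission
  imports Defs
begin

definition dd :: "real \<Rightarrow> real \<Rightarrow> real \<Rightarrow> real \<Rightarrow> real" where
  "dd a b sd y = normal_density a sd y - normal_density b sd y"

definition II :: "real \<Rightarrow> real \<Rightarrow> real \<Rightarrow> real set \<Rightarrow> real" where
  "II a b sd A = (\<integral>y. indicator A y * dd a b sd y \<partial>lborel)"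

lemma nd_int: "integrable lborel (normal_density m sd)"
proof (cases "sd = 0")
  case True
  then have "normal_density m sd = (\<lambda>_. 0)" by (auto simp: normal_density_def)
  then show ?thesis by simp
next
  case False
  then have "normal_density m sd = normal_density m \<bar>sd\<bar>" by (auto simp: normal_density_def)
  moreover have "integrable lborel (normal_density m \<bar>sd\<bar>)" using False
    by (intro integrable_normal_density) simp
  ultimately show ?thesis by simp
qed

lemma int_ind: "A \<in> sets borel \<Longrightarrow> integrable lborel (\<lambda>y. indicator A y * normal_density m sd y)"
  using integrable_mult_indicator[of A lborel "normal_density m sd"] nd_int[of m sd] by simp

lemma int_dd: "A \<in> sets borel \<Longrightarrow> integrable lborel (\<lambda>y. indicator A y * dd a b sd y)"
  unfolding dd_def right_diff_distrib by (intro Bochner_Integration.integrable_diff int_ind)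

lemma II_eq: "A \<in> sets borel \<Longrightarrow> II a b sd A =
   (LINT y:A|lborel. normal_density a sd y) - (LINT y:A|lborel. normal_density b sd y)"
  unfolding II_def set_lebesgue_integral_def dd_def right_diff_distrib
  by (simp add: Bochner_Integration.integral_diff int_ind)

lemma II_cong_AE: "A \<in> sets borel \<Longrightarrow> B \<in> sets borel \<Longrightarrow> (\<And>y. y \<noteq> u \<Longrightarrow> indicator A y = (indicator B y :: real))
   \<Longrightarrow> II a b sd A = II a b sd B"
  unfolding II_def
  by (rule integral_cong_AE) (auto intro!: eventually_mono[OF AE_lborel_singleton[of u]] simp: dd_def)

lemma II_split: "A \<in> sets borel \<Longrightarrow> B \<in> sets borel \<Longrightarrow> A \<inter> B = {} \<Longrightarrow> II a b sd (A \<union> B) = II a b sd A + II a b sd B"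
proof -
  assume h: "A \<in> sets borel" "B \<in> sets borel" "A \<inter> B = {}"
  have "II a b sd (A \<union> B) = (\<integral>y. indicator A y * dd a b sd y + indicator B y * dd a b sd y \<partial>lborel)"
    unfolding II_def using h(3) by (intro Bochner_Integration.integral_cong) (auto split: split_indicator)
  also have "\<dots> = II a b sd A + II a b sd B"
    unfolding II_def using h by (intro Bochner_Integration.integral_add int_dd)
  finally show ?thesis .
qed

lemma II_UNIV: "sd > 0 \<Longrightarrow> II a b sd UNIV = 0"
proof -
  assume that: "sd > 0"
  have "II a b sd UNIV = (LBINT y. normal_density a sd y - normal_density b sd y)" unfolding II_def dd_def by simp
  also have "\<dots> = 0" using that by (subst Bochner_Integration.integral_diff) auto
  finally show ?thesis .
qed

lemma dd_sign1: "sd > 0 \<Longrightarrow> a \<le> b \<Longrightarrow> y \<le> (a+b)/2 \<Longrightarrow> dd a b sd y \<ge> 0"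
proof -
  assume h: "sd > 0" "a \<le> b" "y \<le> (a+b)/2"
  have e: "(y-b)^2 - (y-a)^2 = (b-a)*((a+b) - 2*y)" by (simp add: power2_eq_square algebra_simps)
  have "(b-a)*((a+b) - 2*y) \<ge> 0" using h by (intro mult_nonneg_nonneg) auto
  then have "(y - a)^2 \<le> (y - b)^2" using e by linarith
  then have "- ((y-b)^2) / (2 * sd^2) \<le> - ((y-a)^2) / (2 * sd^2)" using h by (simp add: divide_right_mono)
  then show ?thesis unfolding dd_def normal_density_def by (simp add: divide_right_mono)
qed

lemma dd_sign2: "sd > 0 \<Longrightarrow> a \<le> b \<Longrightarrow> y \<ge> (a+b)/2 \<Longrightarrow> dd a b sd y \<le> 0"
proof -
  assume h: "sd > 0" "a \<le> b" "y \<ge> (a+b)/2"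
  have e: "(y-a)^2 - (y-b)^2 = (b-a)*(2*y - (a+b))" by (simp add: power2_eq_square algebra_simps)
  have "(b-a)*(2*y - (a+b)) \<ge> 0" using h by (intro mult_nonneg_nonneg) auto
  then have "(y - a)^2 \<ge> (y - b)^2" using e by linarith
  then have "- ((y-b)^2) / (2 * sd^2) \<ge> - ((y-a)^2) / (2 * sd^2)" using h by (simp add: divide_right_mono)
  then show ?thesis unfolding dd_def normal_density_def by (simp add: divide_right_mono)
qed

definition GG where "GG a b sd t = II a b sd {..<t}"

lemma G_diff: "x \<le> y \<Longrightarrow> GG a b sd y - GG a b sd x = II a b sd {x..<y}"
proof -
  assume "x \<le> y"
  then have e: "{..<y} = {..<x} \<union> {x..<y}" by auto
  have "II a b sd ({..<x} \<union> {x..<y}) = II a b sd {..<x} + II a b sd {x..<y}"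
    by (rule II_split) auto
  then have "II a b sd {..<y} = II a b sd {..<x} + II a b sd {x..<y}"
    by (subst e)
  then show ?thesis unfolding GG_def by simp
qed

lemma II_nonneg: "(\<And>y. y \<in> A \<Longrightarrow> dd a b sd y \<ge> 0) \<Longrightarrow> II a b sd A \<ge> 0"
  unfolding II_def by (intro Bochner_Integration.integral_nonneg) (auto split: split_indicator)

lemma II_nonpos: "A \<in> sets borel \<Longrightarrow> (\<And>y. y \<in> A \<Longrightarrow> dd a b sd y \<le> 0) \<Longrightarrow> II a b sd A \<le> 0"
proof -
  assume h: "A \<in> sets borel" "\<And>y. y \<in> A \<Longrightarrow> dd a b sd y \<le> 0"
  have "0 \<le> (\<integral>y. - (indicator A y * dd a b sd y) \<partial>lborel)"
    using h by (intro Bochner_Integration.integral_nonneg) (auto split: split_indicator)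
  then show ?thesis unfolding II_def by simp
qed

lemma G_nonneg: assumes "sd > 0" "a \<le> b" shows "GG a b sd t \<ge> 0"
proof (cases "t \<le> (a+b)/2")
  case True
  then show ?thesis unfolding GG_def using assms by (intro II_nonneg dd_sign1) auto
next
  case False
  have "{..<t} \<union> {t..} = UNIV" by auto
  moreover have "{..<t} \<inter> {t..} = {}" by auto
  ultimately have "II a b sd {..<t} + II a b sd {t..} = 0"
    using II_split[of "{..<t}" "{t..}" a b sd] II_UNIV[OF assms(1), of a b] by simp
  moreover have "II a b sd {t..} \<le> 0" using False assms by (intro II_nonpos dd_sign2) auto
  ultimately show ?thesis unfolding GG_def by linarith
qed

lemma G_mono1: assumes "sd > 0" "a \<le> b" "x \<le> y" "y \<le> (a+b)/2" shows "GG a b sd x \<le> GG a b sd y"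
proof -
  have "II a b sd {x..<y} \<ge> 0" using assms by (intro II_nonneg dd_sign1) auto
  then show ?thesis using G_diff[OF assms(3), of a b sd] by linarith
qed

lemma G_mono2: assumes "sd > 0" "a \<le> b" "x \<le> y" "x \<ge> (a+b)/2" shows "GG a b sd y \<le> GG a b sd x"
proof -
  have "II a b sd {x..<y} \<le> 0" using assms by (intro II_nonpos dd_sign2) auto
  then show ?thesis using G_diff[OF assms(3), of a b sd] by linarith
qed

lemma G_le_c: assumes "sd > 0" "a \<le> b" shows "GG a b sd t \<le> GG a b sd ((a+b)/2)"
  using G_mono1[OF assms, of t "(a+b)/2"] G_mono2[OF assms, of "(a+b)/2" t] by (cases "t \<le> (a+b)/2") auto

lemma nd_le: "sd > 0 \<Longrightarrow> normal_density m sd y \<le> 1 / sqrt (2 * pi * sd^2)"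
  unfolding normal_density_def by (simp add: divide_le_eq)

lemma G_c_bound: assumes "sd > 0" "a \<le> b"
  shows "GG a b sd ((a+b)/2) \<le> (b - a) * (1 / sqrt (2 * pi * sd^2))"
proof -
  define c where "c = (a+b)/2"
  define K where "K = 1 / sqrt (2 * pi * sd^2)"
  have e1: "GG a b sd c = (\<integral>y. indicator {..<c} y * normal_density a sd y \<partial>lborel)
      - (\<integral>y. indicator {..<c} y * normal_density b sd y \<partial>lborel)"
    unfolding GG_def using II_eq[of "{..<c}" a b sd] by (simp add: set_lebesgue_integral_def)
  have "(\<integral>y. indicator {..<c} y * normal_density b sd y \<partial>lborel)
      = (\<integral>x. indicator {..<c} ((b - a) + 1 * x) * normal_density b sd ((b - a) + 1 * x) \<partial>lborel)"
    using lborel_integral_real_affine[of 1 "\<lambda>y. indicator {..<c} y * normal_density b sd y" "b - a"] by simp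
  also have "\<dots> = (\<integral>x. indicator {..<c - (b - a)} x * normal_density a sd x \<partial>lborel)"
    by (intro Bochner_Integration.integral_cong) (auto simp: normal_density_def indicator_def)
  finally have e2: "(\<integral>y. indicator {..<c} y * normal_density b sd y \<partial>lborel)
      = (\<integral>x. indicator {..<c - (b - a)} x * normal_density a sd x \<partial>lborel)" .
  have "GG a b sd c = (\<integral>y. indicator {..<c} y * normal_density a sd y - indicator {..<c - (b - a)} y * normal_density a sd y \<partial>lborel)"
    unfolding e1 e2 by (intro Bochner_Integration.integral_diff[symmetric] int_ind) auto
  also have "\<dots> = (\<integral>y. indicator {c - (b-a)..<c} y * normal_density a sd y \<partial>lborel)"
    using assms by (intro Bochner_Integration.integral_cong) (auto simp: indicator_def)
  also have "\<dots> \<le> (\<integral>y. indicator {c - (b-a)..<c} y * K \<partial>lborel)"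
    using assms nd_le[OF assms(1)] unfolding K_def
    by (intro Bochner_Integration.integral_mono int_ind) (auto split: split_indicator)
  also have "\<dots> = (b - a) * K" using assms by simp
  finally show ?thesis unfolding c_def K_def .
qed

lemma bin_borel: "bin s q \<in> sets borel"
  unfolding bin_def by auto

lemma Pbin_diff: "Pbin a sd s q - Pbin b sd s q = II a b sd (bin s q)"
  unfolding Pbin_def using II_eq[OF bin_borel] by simp

lemma x_s0: "sd > 0 \<Longrightarrow> II a b sd (bin 0 q) = 0"
  unfolding bin_def using II_UNIV by simp

lemma x_0: "s > 0 \<Longrightarrow> II a b sd (bin s 0) = GG a b sd (1/2)"
  unfolding bin_def GG_def by simp

lemma x_s: assumes "sd > 0" "s > 0" shows "II a b sd (bin s s) = - GG a b sd (real s - 1/2)"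
proof -
  have "{..<real s - 1/2} \<union> {real s - 1/2..} = UNIV" "{..<real s - 1/2} \<inter> {real s - 1/2..} = {}" by auto
  then have "II a b sd {..<real s - 1/2} + II a b sd {real s - 1/2..} = 0"
    using II_split[of "{..<real s - 1/2}" "{real s - 1/2..}" a b sd] II_UNIV[OF assms(1), of a b] by simp
  then show ?thesis using assms unfolding bin_def GG_def by simp
qed

lemma x_mid: assumes "0 < q" "q < s"
  shows "II a b sd (bin s q) = GG a b sd (real q + 1/2) - GG a b sd (real q - 1/2)"
proof -
  have "II a b sd (bin s q) = II a b sd {real q - 1/2 .. real q + 1/2}" using assms unfolding bin_def by simp
  also have "\<dots> = II a b sd {real q - 1/2 ..< real q + 1/2}"
    by (rule II_cong_AE[where u="real q + 1/2"]) (auto simp: indicator_def)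
  also have "\<dots> = GG a b sd (real q + 1/2) - GG a b sd (real q - 1/2)"
    using G_diff[of "real q - 1/2" "real q + 1/2" a b sd] by simp
  finally show ?thesis .
qed

definition HH where "HH a b sd t = (if t \<le> (a+b)/2 then GG a b sd t - GG a b sd ((a+b)/2) else GG a b sd ((a+b)/2) - GG a b sd t)"

lemma H_step: assumes "sd > 0" "a \<le> b" "u \<le> v"
  shows "\<bar>GG a b sd v - GG a b sd u\<bar> \<le> HH a b sd v - HH a b sd u"
  using G_mono1[OF assms(1,2), of u v] G_mono2[OF assms(1,2), of u v] G_le_c[OF assms(1,2), of u]
    G_le_c[OF assms(1,2), of v] assms(3)
  unfolding HH_def by auto

lemma H_first: assumes "sd > 0" "a \<le> b"
  shows "\<bar>GG a b sd u\<bar> \<le> HH a b sd u + GG a b sd ((a+b)/2)"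
  using G_nonneg[OF assms, of u] G_le_c[OF assms, of u] unfolding HH_def by auto

lemma H_last: assumes "sd > 0" "a \<le> b"
  shows "\<bar>GG a b sd u\<bar> \<le> GG a b sd ((a+b)/2) - HH a b sd u"
  using G_nonneg[OF assms, of u] G_le_c[OF assms, of u] unfolding HH_def by auto

lemma mid_sum: assumes "sd > 0" "a \<le> b" "s \<ge> 1"
  shows "(\<Sum>q\<in>{1..<s}. \<bar>II a b sd (bin s q)\<bar>) \<le> HH a b sd (real s - 1/2) - HH a b sd (1/2)"
proof -
  have "(\<Sum>q\<in>{1..<k}. \<bar>GG a b sd (real q + 1/2) - GG a b sd (real q - 1/2)\<bar>) \<le> HH a b sd (real k - 1/2) - HH a b sd (1/2)"
    if "k \<ge> 1" for k
    using that
  proof (induction k rule: dec_induct)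
    case base
    then show ?case by simp
  next
    case (step k)
    have "\<bar>GG a b sd (real k + 1/2) - GG a b sd (real k - 1/2)\<bar> \<le> HH a b sd (real k + 1/2) - HH a b sd (real k - 1/2)"
      using H_step[OF assms(1,2)] by simp
    then show ?case using step by (simp add: algebra_simps)
  qed
  moreover have "(\<Sum>q\<in>{1..<s}. \<bar>II a b sd (bin s q)\<bar>) = (\<Sum>q\<in>{1..<s}. \<bar>GG a b sd (real q + 1/2) - GG a b sd (real q - 1/2)\<bar>)"
    by (intro sum.cong refl) (simp add: x_mid)
  ultimately show ?thesis using assms(3) by simp
qed

lemma main_le: assumes "sd > 0" "a \<le> b"
  shows "(\<Sum>q\<le>s. \<bar>Pbin a sd s q - Pbin b sd s q\<bar>) \<le> (b - a) / sd"
proof (cases "s = 0")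
  case True
  then show ?thesis using assms by (simp add: Pbin_diff x_s0)
next
  case False
  define Gc where "Gc = GG a b sd ((a+b)/2)"
  have split: "{..s} = insert 0 (insert s {1..<s})" using False by auto
  have "(\<Sum>q\<le>s. \<bar>Pbin a sd s q - Pbin b sd s q\<bar>) = (\<Sum>q\<le>s. \<bar>II a b sd (bin s q)\<bar>)"
    by (simp add: Pbin_diff)
  also have "\<dots> = \<bar>II a b sd (bin s 0)\<bar> + (\<bar>II a b sd (bin s s)\<bar> + (\<Sum>q\<in>{1..<s}. \<bar>II a b sd (bin s q)\<bar>))"
    unfolding split using False by simp
  also have "\<dots> \<le> (HH a b sd (1/2) + Gc) + ((Gc - HH a b sd (real s - 1/2)) + (HH a b sd (real s - 1/2) - HH a b sd (1/2)))"
  proof (intro add_mono)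
    show "\<bar>II a b sd (bin s 0)\<bar> \<le> HH a b sd (1/2) + Gc"
      using x_0[of s a b sd] False H_first[OF assms, of "1/2"] unfolding Gc_def by simp
    show "\<bar>II a b sd (bin s s)\<bar> \<le> Gc - HH a b sd (real s - 1/2)"
      using x_s[OF assms(1), of s a b] False H_last[OF assms, of "real s - 1/2"] unfolding Gc_def by simp
    show "(\<Sum>q\<in>{1..<s}. \<bar>II a b sd (bin s q)\<bar>) \<le> HH a b sd (real s - 1/2) - HH a b sd (1/2)"
      using mid_sum[OF assms, of s] False by simp
  qed
  also have "\<dots> = 2 * Gc" by simp
  also have "\<dots> \<le> 2 * ((b - a) * (1 / sqrt (2 * pi * sd^2)))"
    using G_c_bound[OF assms] unfolding Gc_def by (intro mult_left_mono) auto
  also have "\<dots> \<le> (b - a) / sd"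
  proof -
    have "sqrt (2 * pi * sd^2) = sqrt (2 * pi) * sd" using assms by (simp add: real_sqrt_mult)
    moreover have "2 \<le> sqrt (2 * pi)" using pi_gt3 by (simp add: real_le_rsqrt)
    ultimately have "2 * (1 / sqrt (2 * pi * sd^2)) \<le> 1 / sd"
      using assms by (simp add: field_simps)
    then have "(b - a) * (2 * (1 / sqrt (2 * pi * sd^2))) \<le> (b - a) * (1 / sd)"
      using assms by (intro mult_left_mono) auto
    moreover have "2 * ((b - a) * (1 / sqrt (2 * pi * sd^2))) = (b - a) * (2 * (1 / sqrt (2 * pi * sd^2)))"
      by (simp only: mult_ac)
    moreover have "(b - a) * (1 / sd) = (b - a) / sd" by simp
    ultimately show ?thesis by (simp only:)
  qed
  finally show ?thesis .
qed

theorem lemma5: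
  fixes mu sigma :: "nat \<Rightarrow> real \<Rightarrow> real" and h :: "real \<Rightarrow> real"
    and n s C :: nat and p p_l p_h :: real
  assumes "s \<le> C" and "p \<in> {p_l..p_h}" and "sigma n p > 0"
  shows "(\<Sum>q\<le>s. \<bar>Pbin (mu n p) (sigma n p) s q - Pbin (h p) (sigma n p) s q\<bar>)
           \<le> \<bar>mu n p - h p\<bar> / sigma n p"
proof (cases "mu n p \<le> h p")
  case True
  then show ?thesis using main_le[OF assms(3) True, of s] by simp
next
  case False
  then have "h p \<le> mu n p" by simp
  from main_le[OF assms(3) this, of s] False show ?thesis
    by (simp add: abs_minus_commute)
qed

end
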